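(* Let $\mathcal{D}$ be a distribution on $\mathbb{S}^{n-1}$, $f(x)=\bigwedge_{i=1}^k\mathrm{sign}(w_i\cdot x)$ with unit vectors $w_i$, $\varepsilon,\rho\in(0,1/2)$, and suppose $\Pr_{\mathbf{x}\sim\mathcal{D}_-}[w_1\cdot\mathbf{x}<-\rho]>0$. Let $\mathcal{K}\subseteq\mathbb{R}^{n+1}$ be a bounded convex body and for $x\in\mathbb{R}^n$ let $\mathcal{K}_x=\mathcal{K}\cap\{w:w\cdot(x,1)<0\}$. Let $\mathcal{D}_-^{(1)}$ denote $\mathcal{D}_-$ conditioned on $w_1\cdot\mathbf{x}<-\rho$. Then \[\Pr_{\mathbf{x}\sim\mathcal{D}_-}[w_1\cdot\mathbf{x}<-\rho]\cdot\mathbb{E}_{\mathbf{x}\sim\mathcal{D}_-^{(1)}}\left[\left|\mathcal{K}_{\mathbf{x}}^{\mathrm{bad}}\right|\right]\le\frac{100n}{\varepsilon^2}\cdot M_+^{-1}\log(M_+)\cdot\left|\mathcal{K}^{\mathrm{bad}}\right|.\]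
   Context: $f(x)=1$ iff $w_i\cdot x>0$ for all $i$, else $-1$; $\mathcal{D}_-$ is $\mathcal{D}$ conditioned on $f(\mathbf{x})=-1$; $|\cdot|$ is Lebesgue volume. Set $M_-=\sqrt{n\log(9/\rho)/\log(2k\varepsilon^{-1})}$ and $M_+=\left(200k\cdot\frac{n^2M_-}{\varepsilon^4}\right)^2\cdot2^{\sqrt{n\log(9/\rho)\log(2k\varepsilon^{-1})}}$. For any convex body $\mathcal{K}\subseteq\mathbb{R}^{n+1}$, $\mathcal{K}^{\mathrm{good}}=\{w\in\mathcal{K}:\Pr_{\mathbf{x}\sim\mathcal{D}_-}[w\cdot(\mathbf{x},1)<0]\ge\frac{100n}{\varepsilon^2}\cdot\frac{\log(M_+)}{M_+}\}$ and $\mathcal{K}^{\mathrm{bad}}=\mathcal{K}\setminus\mathcal{K}^{\mathrm{good}}$ (applied to $\mathcal{K}_x$ as well). *)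

theory Defs
  imports "HOL-Probability.Probability"
begin

definition halfspace_and :: "nat \<Rightarrow> (nat \<Rightarrow> real^'n) \<Rightarrow> real^'n \<Rightarrow> real" where
  "halfspace_and k w x = (if \<forall>i\<in>{1..k}. w i \<bullet> x > 0 then 1 else -1)"

definition Dminus :: "(real^'n) measure \<Rightarrow> nat \<Rightarrow> (nat \<Rightarrow> real^'n) \<Rightarrow> (real^'n) measure" where
  "Dminus D k w = uniform_measure D {x \<in> space D. halfspace_and k w x = -1}"

definition Mminus :: "nat \<Rightarrow> nat \<Rightarrow> real \<Rightarrow> real \<Rightarrow> real" where
  "Mminus n k eps rho = sqrt (real n * ln (9 / rho) / ln (2 * real k / eps))"

definition Mplus :: "nat \<Rightarrow> nat \<Rightarrow> real \<Rightarrow> real \<Rightarrow> real" where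
  "Mplus n k eps rho =
     (200 * real k * (real n ^ 2 * Mminus n k eps rho / eps ^ 4)) ^ 2 *
     2 powr sqrt (real n * ln (9 / rho) * ln (2 * real k / eps))"

definition good_thr :: "nat \<Rightarrow> nat \<Rightarrow> real \<Rightarrow> real \<Rightarrow> real" where
  "good_thr n k eps rho = 100 * real n / eps ^ 2 * (ln (Mplus n k eps rho) / Mplus n k eps rho)"

text \<open>R^{n+1} is represented as (real^'n) \<times> real, so that w . (x,1) = inner w (x,1).\<close>
definition Kgood :: "(real^'n) measure \<Rightarrow> real \<Rightarrow> ((real^'n) \<times> real) set \<Rightarrow> ((real^'n) \<times> real) set" where
  "Kgood Dm t K = {v \<in> K. measure Dm {x \<in> space Dm. v \<bullet> (x, 1) < 0} \<ge> t}"

definition Kbad :: "(real^'n) measure \<Rightarrow> real \<Rightarrow> ((real^'n) \<times> real) set \<Rightarrow> ((real^'n) \<times> real) set" where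
  "Kbad Dm t K = K - Kgood Dm t K"

definition Kslice :: "((real^'n) \<times> real) set \<Rightarrow> real^'n \<Rightarrow> ((real^'n) \<times> real) set" where
  "Kslice K x = K \<inter> {v. v \<bullet> (x, 1) < 0}"

end

theory Submission
  imports Defs
begin

theorem lemma3p4:
  fixes D :: "(real^'n) measure" and k :: nat and w :: "nat \<Rightarrow> real^'n"
    and eps rho :: real and K :: "((real^'n) \<times> real) set"
  assumes D_prob: "prob_space D" and D_sets: "sets D = sets borel"
    and D_sphere: "measure D (sphere 0 1) = 1"
    and k_pos: "k \<ge> 1"
    and w_unit: "\<And>i. i \<in> {1..k} \<Longrightarrow> norm (w i) = 1"
    and eps: "0 < eps" "eps < 1/2" and rho: "0 < rho" "rho < 1/2"
    and neg_pos: "measure D {x \<in> space D. halfspace_and k w x = -1} > 0"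
    and w1_pos: "measure (Dminus D k w) {x \<in> space (Dminus D k w). w 1 \<bullet> x < - rho} > 0"
    and K_convex: "convex K" and K_compact: "compact K" and K_int: "interior K \<noteq> {}"
  shows "measure (Dminus D k w) {x \<in> space (Dminus D k w). w 1 \<bullet> x < - rho} *
           integral\<^sup>L (uniform_measure (Dminus D k w) {x \<in> space (Dminus D k w). w 1 \<bullet> x < - rho})
             (\<lambda>x. measure lebesgue
                   (Kbad (Dminus D k w) (good_thr CARD('n) k eps rho) (Kslice K x)))
         \<le> good_thr CARD('n) k eps rho *
           measure lebesgue (Kbad (Dminus D k w) (good_thr CARD('n) k eps rho) K)"
proof -
  define Dm where "Dm = Dminus D k w"
  define t where "t = good_thr CARD('n) k eps rho"
  define A where "A = {x \<in> space Dm. w 1 \<bullet> x < - rho}"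
  define B where "B = Kbad Dm t K"
  define g where "g = (\<lambda>v::(real^'n)\<times>real. measure Dm {x \<in> space Dm. v \<bullet> (x, 1) < 0})"
  define S where "S = {x \<in> space D. halfspace_and k w x = -1}"
  interpret D: prob_space D by (rule D_prob)
  have S_sets: "S \<in> sets D" using neg_pos measure_notin_sets unfolding S_def by fastforce
  have S_pos: "emeasure D S \<noteq> 0" using neg_pos unfolding S_def[symmetric]
    by (simp add: D.emeasure_eq_measure)
  have Dm_eq: "Dm = uniform_measure D S" unfolding Dm_def Dminus_def S_def ..
  interpret Dm: prob_space Dm unfolding Dm_eq
    by (rule prob_space_uniform_measure[OF S_pos]) simp
  have Dm_sets: "sets Dm = sets borel" unfolding Dm_eq using D_sets by simp
  have Dm_space: "space Dm = UNIV" using sets_eq_imp_space_eq[OF Dm_sets] by simp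
  have A_sets: "A \<in> sets Dm" using w1_pos measure_notin_sets unfolding A_def Dm_def by fastforce
  have A_pos: "measure Dm A > 0" using w1_pos unfolding A_def Dm_def by simp
  have Bsl: "\<And>x. Kbad Dm t (Kslice K x) = B \<inter> {v. v \<bullet> (x, 1) < 0}"
    unfolding B_def Kbad_def Kgood_def Kslice_def by auto
  have B_eq: "B = K \<inter> {v. g v < t}"
    unfolding B_def Kbad_def Kgood_def g_def by auto
  interpret L: sigma_finite_measure "lborel :: ((real^'n)\<times>real) measure" by (rule lborel.sigma_finite_measure_axioms)
  interpret P1: pair_sigma_finite "lborel :: ((real^'n)\<times>real) measure" Dm
    by unfold_locales
  have G_sets: "{p :: ((real^'n)\<times>real)\<times>(real^'n). fst p \<bullet> (snd p, 1) < 0}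
      \<in> sets ((lborel :: ((real^'n)\<times>real) measure) \<Otimes>\<^sub>M Dm)"
  proof -
    have "sets ((lborel :: ((real^'n)\<times>real) measure) \<Otimes>\<^sub>M Dm) = sets (borel \<Otimes>\<^sub>M borel)"
      using Dm_sets by (intro sets_pair_measure_cong) auto
    also have "\<dots> = sets borel" by (subst borel_prod) (rule refl)
    finally have e: "sets ((lborel :: ((real^'n)\<times>real) measure) \<Otimes>\<^sub>M Dm) = sets borel" .
    have "open {p :: ((real^'n)\<times>real)\<times>(real^'n). fst p \<bullet> (snd p, 1) < 0}"
      by (intro open_Collect_less continuous_intros)
    then show ?thesis unfolding e by (rule borel_open)
  qed
  have g_meas: "g \<in> borel_measurable lborel"
  proof -
    have "(\<lambda>v. emeasure Dm (Pair v -` {p :: ((real^'n)\<times>real)\<times>(real^'n). fst p \<bullet> (snd p, 1) < 0}))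
       \<in> borel_measurable lborel"
      by (rule Dm.measurable_emeasure_Pair[OF G_sets])
    then have "(\<lambda>v. enn2real (emeasure Dm (Pair v -` {p :: ((real^'n)\<times>real)\<times>(real^'n). fst p \<bullet> (snd p, 1) < 0})))
       \<in> borel_measurable lborel" by measurable
    moreover have "\<And>v. enn2real (emeasure Dm (Pair v -` {p :: ((real^'n)\<times>real)\<times>(real^'n). fst p \<bullet> (snd p, 1) < 0})) = g v"
      unfolding g_def measure_def by (simp add: Dm_space)
    ultimately show ?thesis by simp
  qed
  have B_sets: "B \<in> sets lborel"
  proof -
    have "{v \<in> space lborel. g v < t} \<in> sets lborel" using g_meas by measurable
    moreover have "K \<in> sets lborel" using K_compact by (simp add: compact_imp_closed borel_closed)
    ultimately show ?thesis unfolding B_eq by (simp add: Int_commute)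
  qed
  define H where "H = {p :: (real^'n)\<times>((real^'n)\<times>real). snd p \<bullet> (fst p, 1) < 0}"
  define f where "f = (\<lambda>x. measure lebesgue (B \<inter> {v. v \<bullet> (x, 1) < 0}))"
  define U where "U = uniform_measure Dm A"
  have B_sub: "B \<subseteq> K" unfolding B_eq by auto
  have finB: "\<And>C. C \<subseteq> B \<Longrightarrow> emeasure lborel C < \<infinity>"
  proof -
    fix C assume "C \<subseteq> B"
    then have "emeasure lborel C \<le> emeasure lborel K"
      using B_sub K_compact by (intro emeasure_mono) (auto intro: borel_compact)
    then show "emeasure lborel C < \<infinity>" using emeasure_compact_finite[OF K_compact] by simp
  qed
  have H_open: "open H" unfolding H_def by (intro open_Collect_less continuous_intros)
  have BH_sets: "\<And>x. B \<inter> {v. v \<bullet> (x, 1) < 0} \<in> sets lborel"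
  proof -
    fix x :: "real^'n"
    have "open {v :: (real^'n)\<times>real. v \<bullet> (x, 1) < 0}"
      by (intro open_Collect_less continuous_intros)
    then show "B \<inter> {v. v \<bullet> (x, 1) < 0} \<in> sets lborel" using B_sets by auto
  qed
  have f_eq: "\<And>x. ennreal (f x) = emeasure lborel (B \<inter> {v. v \<bullet> (x, 1) < 0})"
    unfolding f_def using BH_sets finB
    by (simp add: emeasure_eq_ennreal_measure less_top[symmetric])
  have f_nn: "\<And>x. f x \<ge> 0" unfolding f_def by simp
  have lhs_eq: "measure Dm A * integral\<^sup>L U f = measure (Dminus D k w) {x \<in> space (Dminus D k w). w 1 \<bullet> x < - rho} *
           integral\<^sup>L (uniform_measure (Dminus D k w) {x \<in> space (Dminus D k w). w 1 \<bullet> x < - rho})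
             (\<lambda>x. measure lebesgue
                   (Kbad (Dminus D k w) (good_thr CARD('n) k eps rho) (Kslice K x)))"
    unfolding U_def A_def Dm_def f_def Bsl[unfolded Dm_def t_def] t_def B_def ..
  have rhs_eq: "t * measure lborel B = good_thr CARD('n) k eps rho *
           measure lebesgue (Kbad (Dminus D k w) (good_thr CARD('n) k eps rho) K)"
    unfolding t_def B_def Dm_def using B_sets[unfolded B_def Dm_def t_def] by simp
  show ?thesis
  proof (cases "t \<le> 0")
    case True
    have "B = {}" unfolding B_eq g_def using True by (auto simp: not_less) (meson measure_nonneg order.trans not_less)
    then have "measure Dm A * integral\<^sup>L U f = 0" "t * measure lborel B = 0"
      by (simp_all add: f_def)
    then show ?thesis using lhs_eq rhs_eq by linarith
  next
    case tpos: False
    have key: "ennreal (measure Dm A * integral\<^sup>L U f) \<le> ennreal t * emeasure lborel B"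
    proof (cases "integrable U f")
      case False
      then show ?thesis by (simp add: not_integrable_integral_eq)
    next
      case True
      define F where "F = (\<lambda>x v. indicator A x * indicator B v * indicator H (x, v) :: ennreal)"
      interpret P2: pair_sigma_finite Dm "lborel :: ((real^'n)\<times>real) measure"
        by unfold_locales
      have sets_prod: "sets (Dm \<Otimes>\<^sub>M (lborel :: ((real^'n)\<times>real) measure)) = sets borel"
      proof -
        have "sets (Dm \<Otimes>\<^sub>M (lborel :: ((real^'n)\<times>real) measure)) = sets (borel \<Otimes>\<^sub>M borel)"
          using Dm_sets by (intro sets_pair_measure_cong) auto
        also have "\<dots> = sets borel" by (subst borel_prod) (rule refl)
        finally show ?thesis .
      qed
      have AB_sets: "(A \<times> B) \<inter> H \<in> sets (Dm \<Otimes>\<^sub>M (lborel :: ((real^'n)\<times>real) measure))"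
      proof -
        have "A \<times> B \<in> sets (Dm \<Otimes>\<^sub>M (lborel :: ((real^'n)\<times>real) measure))"
          using A_sets B_sets by auto
        moreover have "H \<in> sets (Dm \<Otimes>\<^sub>M (lborel :: ((real^'n)\<times>real) measure))"
          unfolding sets_prod using H_open by (rule borel_open)
        ultimately show ?thesis by auto
      qed
      have F_meas: "case_prod F \<in> borel_measurable (Dm \<Otimes>\<^sub>M (lborel :: ((real^'n)\<times>real) measure))"
      proof -
        have "case_prod F = indicator ((A \<times> B) \<inter> H)"
          by (auto simp: fun_eq_iff F_def split: split_indicator)
        then show ?thesis using AB_sets by simp
      qed
      have fm: "f \<in> borel_measurable Dm"
        using borel_measurable_integrable[OF True] unfolding U_def
        by (subst measurable_cong_sets[where M'="uniform_measure Dm A" and N'=borel]) auto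
      have mA: "emeasure Dm A = ennreal (measure Dm A)" by (rule Dm.emeasure_eq_measure)
      have "ennreal (integral\<^sup>L U f) = (\<integral>\<^sup>+ x. ennreal (f x) \<partial>U)"
        using nn_integral_eq_integral[OF True] f_nn by simp
      also have "\<dots> = (\<integral>\<^sup>+ x. ennreal (f x) * indicator A x \<partial>Dm) / emeasure Dm A"
        unfolding U_def by (rule nn_integral_uniform_measure) (use fm A_sets in auto)
      finally have I_eq: "ennreal (integral\<^sup>L U f) = (\<integral>\<^sup>+ x. ennreal (f x) * indicator A x \<partial>Dm) / emeasure Dm A" .
      have "ennreal (measure Dm A * integral\<^sup>L U f) = ennreal (measure Dm A) * ennreal (integral\<^sup>L U f)"
        using f_nn by (simp add: ennreal_mult integral_nonneg)
      also have "\<dots> = (\<integral>\<^sup>+ x. ennreal (f x) * indicator A x \<partial>Dm)"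
        unfolding I_eq mA[symmetric] ennreal_times_divide
        by (subst mult.commute, rule ennreal_mult_divide_eq) (use A_pos mA in auto)
      also have "\<dots> = (\<integral>\<^sup>+ x. (\<integral>\<^sup>+ v. F x v \<partial>lborel) \<partial>Dm)"
      proof (rule nn_integral_cong)
        fix x
        have "(\<lambda>v. F x v) = (\<lambda>v. indicator A x * indicator (B \<inter> {v. v \<bullet> (x, 1) < 0}) v)"
          by (auto simp: fun_eq_iff F_def H_def split: split_indicator)
        then have "(\<integral>\<^sup>+ v. F x v \<partial>lborel) = indicator A x * emeasure lborel (B \<inter> {v. v \<bullet> (x, 1) < 0})"
          using BH_sets by (simp add: nn_integral_cmult_indicator)
        then show "ennreal (f x) * indicator A x = (\<integral>\<^sup>+ v. F x v \<partial>lborel)"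
          by (simp add: f_eq mult.commute)
      qed
      also have "\<dots> = (\<integral>\<^sup>+ v. (\<integral>\<^sup>+ x. F x v \<partial>Dm) \<partial>lborel)"
        using P2.Fubini'[OF F_meas] by simp
      also have "\<dots> \<le> (\<integral>\<^sup>+ v. ennreal t * indicator B v \<partial>lborel)"
      proof (rule nn_integral_mono)
        fix v :: "(real^'n)\<times>real"
        define Hv where "Hv = {x \<in> space Dm. v \<bullet> (x, 1) < 0}"
        have Hv_sets: "Hv \<in> sets Dm"
        proof -
          have "open {x :: real^'n. v \<bullet> (x, 1) < 0}"
            by (intro open_Collect_less continuous_intros)
          then show ?thesis unfolding Hv_def Dm_sets Dm_space by simp
        qed
        have "(\<integral>\<^sup>+ x. F x v \<partial>Dm) \<le> (\<integral>\<^sup>+ x. indicator B v * indicator Hv x \<partial>Dm)"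
          by (intro nn_integral_mono) (auto simp: F_def H_def Hv_def Dm_space split: split_indicator)
        also have "\<dots> = indicator B v * emeasure Dm Hv"
          using Hv_sets by (simp add: nn_integral_cmult_indicator)
        also have "\<dots> \<le> ennreal t * indicator B v"
        proof (cases "v \<in> B")
          case True
          then have "g v < t" unfolding B_eq by auto
          then have "emeasure Dm Hv \<le> ennreal t"
            unfolding Dm.emeasure_eq_measure Hv_def using g_def by (simp add: ennreal_leI)
          then show ?thesis using True by simp
        qed simp
        finally show "(\<integral>\<^sup>+ x. F x v \<partial>Dm) \<le> ennreal t * indicator B v" .
      qed
      also have "\<dots> = ennreal t * emeasure lborel B"
        using B_sets by (simp add: nn_integral_cmult_indicator)
      finally show ?thesis .
    qed
    have "measure Dm A * integral\<^sup>L U f \<le> t * measure lborel B"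
    proof -
      have "ennreal t * emeasure lborel B = ennreal (t * measure lborel B)"
        using finB[of B] tpos by (simp add: emeasure_eq_ennreal_measure less_top[symmetric] ennreal_mult)
      with key have "ennreal (measure Dm A * integral\<^sup>L U f) \<le> ennreal (t * measure lborel B)" by simp
      then show ?thesis using tpos by (subst (asm) ennreal_le_iff) auto
    qed
    then show ?thesis using lhs_eq rhs_eq by simp
  qed
qed

end
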